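(* Let $d\ge 4$ and let $\alpha(x,y)$ be a very general binary form of degree $d$ over $\mathbb{C}$ (i.e. outside a countable union of proper subvarieties of the space of binary forms of degree $d$). Then the binary forms $h(x,y)$ (of any degree) satisfying $T(\alpha,h)=0$ are exactly the linear combinations of: $1$ (in degree 0); $x$ and $y$ (in degree 1); $\alpha_1$ and $\alpha_2$ (in degree $d-1$); and $\alpha$ (in degree $d$). In particular, for any degree other than $0,1,d-1,d$, the only such $h$ is $h=0$.
   Context: For binary forms $\alpha(x,y)$, $h(x,y)$ write $\alpha_1=\partial\alpha/\partial x$, $\alpha_2=\partial\alpha/\partial y$, $\alpha_{112}=\partial^3\alpha/\partial x^2\partial y$, etc., and similarly for $h$. Define $T(\alpha,h)=h_{11}(\alpha_{112}\alpha_{222}-\alpha_{122}^2)+h_{12}(\alpha_{112}\alpha_{122}-\alpha_{111}\alpha_{222})+h_{22}(\alpha_{111}\alpha_{122}-\alpha_{112}^2).$ *)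

theory Defs
  imports "HOL-Analysis.Analysis"
begin

definition bform :: "nat \<Rightarrow> (nat \<Rightarrow> complex) \<Rightarrow> complex \<Rightarrow> complex \<Rightarrow> complex" where
  "bform n c = (\<lambda>x y. \<Sum>i\<le>n. c i * x ^ i * y ^ (n - i))"

definition D1 :: "(complex \<Rightarrow> complex \<Rightarrow> complex) \<Rightarrow> complex \<Rightarrow> complex \<Rightarrow> complex" where
  "D1 f = (\<lambda>x y. deriv (\<lambda>t. f t y) x)"

definition D2 :: "(complex \<Rightarrow> complex \<Rightarrow> complex) \<Rightarrow> complex \<Rightarrow> complex \<Rightarrow> complex" where
  "D2 f = (\<lambda>x y. deriv (\<lambda>t. f x t) y)"

definition Top :: "(complex \<Rightarrow> complex \<Rightarrow> complex) \<Rightarrow> (complex \<Rightarrow> complex \<Rightarrow> complex)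
    \<Rightarrow> complex \<Rightarrow> complex \<Rightarrow> complex" where
  "Top a h = (\<lambda>x y.
     let a111 = D1 (D1 (D1 a)) x y; a112 = D2 (D1 (D1 a)) x y;
         a122 = D2 (D2 (D1 a)) x y; a222 = D2 (D2 (D2 a)) x y;
         h11 = D1 (D1 h) x y; h12 = D2 (D1 h) x y; h22 = D2 (D2 h) x y
     in h11 * (a112 * a222 - a122 ^ 2) + h12 * (a112 * a122 - a111 * a222)
        + h22 * (a111 * a122 - a112 ^ 2))"

definition poly_fun :: "nat \<Rightarrow> ((nat \<Rightarrow> complex) \<Rightarrow> complex) \<Rightarrow> bool" where
  "poly_fun n P \<longleftrightarrow> (\<exists>M coef. finite M \<and>
     P = (\<lambda>c. \<Sum>m\<in>M. coef m * (\<Prod>i\<le>n. c i ^ m i)))"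

definition proper_subvariety :: "nat \<Rightarrow> (nat \<Rightarrow> complex) set \<Rightarrow> bool" where
  "proper_subvariety n V \<longleftrightarrow> V \<noteq> UNIV \<and>
     (\<exists>S. (\<forall>P\<in>S. poly_fun n P) \<and> V = {c. \<forall>P\<in>S. P c = 0})"

definition very_general :: "nat \<Rightarrow> ((nat \<Rightarrow> complex) \<Rightarrow> bool) \<Rightarrow> bool" where
  "very_general n Q \<longleftrightarrow> (\<exists>V :: nat \<Rightarrow> (nat \<Rightarrow> complex) set.
     (\<forall>k. proper_subvariety n (V k)) \<and> (\<forall>c. c \<notin> (\<Union>k. V k) \<longrightarrow> Q c))"

end

theory Submission
  imports Defs "Jordan_Normal_Form.Determinant"
begin

definition ms :: "'i set \<Rightarrow> ('i \<Rightarrow> complex) \<Rightarrow> ('i \<Rightarrow> nat) \<Rightarrow> ('i \<Rightarrow> nat) \<Rightarrow> complex \<Rightarrow> complex \<Rightarrow> complex" where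
  "ms I c f g = (\<lambda>x y. \<Sum>i\<in>I. c i * x ^ f i * y ^ g i)"

lemma term_deriv: "((\<lambda>t::complex. c * t ^ n * k) has_field_derivative c * (of_nat n * x ^ (n - 1)) * k) (at x)"
proof -
  have "((\<lambda>t::complex. t ^ n) has_field_derivative of_nat n * (1 * x ^ (n - Suc 0))) (at x)"
    by (rule DERIV_power[OF DERIV_ident])
  then show ?thesis by (auto intro!: DERIV_cmult DERIV_cmult_right)
qed

lemma D1_ms: "D1 (ms I c f g) = ms I (\<lambda>i. c i * of_nat (f i)) (\<lambda>i. f i - 1) g"
proof (intro ext)
  fix x y
  have "((\<lambda>t. \<Sum>i\<in>I. c i * t ^ f i * y ^ g i) has_field_derivative
      (\<Sum>i\<in>I. c i * (of_nat (f i) * x ^ (f i - 1)) * y ^ g i)) (at x)"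
    by (intro DERIV_sum term_deriv)
  then show "D1 (ms I c f g) x y = ms I (\<lambda>i. c i * of_nat (f i)) (\<lambda>i. f i - 1) g x y"
    unfolding D1_def ms_def by (simp add: DERIV_imp_deriv mult.assoc mult.left_commute)
qed

lemma D2_ms: "D2 (ms I c f g) = ms I (\<lambda>i. c i * of_nat (g i)) f (\<lambda>i. g i - 1)"
proof (intro ext)
  fix x y
  have "((\<lambda>t. \<Sum>i\<in>I. c i * x ^ f i * t ^ g i) has_field_derivative
      (\<Sum>i\<in>I. (c i * x ^ f i) * (of_nat (g i) * y ^ (g i - 1)) * 1)) (at y)"
    using term_deriv[of "c i * x ^ f i" "g i" 1 y for i] by (intro DERIV_sum) simp
  then show "D2 (ms I c f g) x y = ms I (\<lambda>i. c i * of_nat (g i)) f (\<lambda>i. g i - 1) x y"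
    unfolding D2_def ms_def by (simp add: DERIV_imp_deriv mult.assoc mult.left_commute)
qed

lemma D12_comm: "D1 (D2 (ms I c f g)) = D2 (D1 (ms I c f g))"
  by (simp add: D1_ms D2_ms mult_ac)

lemma bform_ms: "bform n c = ms {..n} c (\<lambda>i. i) (\<lambda>i. n - i)"
  by (simp add: bform_def ms_def)

lemma euler_ms:
  assumes "finite I" "\<And>i. i \<in> I \<Longrightarrow> c i \<noteq> 0 \<Longrightarrow> f i + g i = n"
  shows "x * D1 (ms I c f g) x y + y * D2 (ms I c f g) x y = of_nat n * ms I c f g x y"
proof -
  have "x * D1 (ms I c f g) x y + y * D2 (ms I c f g) x y
     = (\<Sum>i\<in>I. c i * of_nat (f i + g i) * x ^ f i * y ^ g i)"
    unfolding D1_ms D2_ms unfolding ms_def sum_distrib_left sum.distrib[symmetric]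
  proof (rule sum.cong[OF refl])
    fix i assume "i \<in> I"
    have a: "x * (c i * of_nat (f i) * x ^ (f i - 1) * y ^ g i) = c i * of_nat (f i) * x ^ f i * y ^ g i"
      by (cases "f i") (auto simp: algebra_simps)
    have b: "y * (c i * of_nat (g i) * x ^ f i * y ^ (g i - 1)) = c i * of_nat (g i) * x ^ f i * y ^ g i"
      by (cases "g i") (auto simp: algebra_simps)
    show "x * (c i * of_nat (f i) * x ^ (f i - 1) * y ^ g i) + y * (c i * of_nat (g i) * x ^ f i * y ^ (g i - 1))
        = c i * of_nat (f i + g i) * x ^ f i * y ^ g i"
      unfolding a b by (simp add: algebra_simps)
  qed
  also have "\<dots> = (\<Sum>i\<in>I. of_nat n * (c i * x ^ f i * y ^ g i))"
  proof (rule sum.cong[OF refl])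
    fix i assume i: "i \<in> I"
    show "c i * of_nat (f i + g i) * x ^ f i * y ^ g i = of_nat n * (c i * x ^ f i * y ^ g i)"
    proof (cases "c i = 0")
      case False
      then have "f i + g i = n" using assms(2) i by blast
      then show ?thesis by simp
    qed simp
  qed
  finally show ?thesis by (simp add: ms_def sum_distrib_left)
qed


lemma prod3: "(\<Sum>p\<in>A. X p) * (\<Sum>i\<in>B. Y i) * (\<Sum>j\<in>C. Z j) = (\<Sum>p\<in>A. \<Sum>i\<in>B. \<Sum>j\<in>C. X p * Y i * Z j)"
  for X :: "'a \<Rightarrow> complex" and Y :: "'b \<Rightarrow> complex" and Z :: "'c \<Rightarrow> complex"
proof -
  have "(\<Sum>p\<in>A. X p) * (\<Sum>i\<in>B. Y i) * (\<Sum>j\<in>C. Z j) = (\<Sum>p\<in>A. X p * ((\<Sum>i\<in>B. Y i) * (\<Sum>j\<in>C. Z j)))"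
    by (simp add: sum_distrib_right mult.assoc)
  also have "\<dots> = (\<Sum>p\<in>A. X p * (\<Sum>i\<in>B. \<Sum>j\<in>C. Y i * Z j))"
    by (simp add: sum_product)
  also have "\<dots> = (\<Sum>p\<in>A. \<Sum>i\<in>B. \<Sum>j\<in>C. X p * (Y i * Z j))"
    by (simp add: sum_distrib_left)
  finally show ?thesis by (simp add: mult.assoc)
qed

lemma sum3_mult: "(\<Sum>p\<in>A. \<Sum>i\<in>B. \<Sum>j\<in>C. h p i j) * c = (\<Sum>p\<in>A. \<Sum>i\<in>B. \<Sum>j\<in>C. h p i j * c)"
  for h :: "'a \<Rightarrow> 'b \<Rightarrow> 'c \<Rightarrow> complex"
  by (simp add: sum_distrib_right)

lemma ms3:
  assumes "\<And>p i j. p \<in> A \<Longrightarrow> i \<in> B \<Longrightarrow> j \<in> B \<Longrightarrow> c1 p * c2 i * c3 j \<noteq> 0 \<Longrightarrow>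
      f1 p + f2 i + f3 j = E p i j \<and> g1 p + g2 i + g3 j = F p i j"
  shows "ms A c1 f1 g1 x y * ms B c2 f2 g2 x y * ms B c3 f3 g3 x y =
    (\<Sum>p\<in>A. \<Sum>i\<in>B. \<Sum>j\<in>B. c1 p * c2 i * c3 j * x ^ E p i j * y ^ F p i j)"
  unfolding ms_def prod3
proof (intro sum.cong refl)
  fix p i j assume h: "p \<in> A" "i \<in> B" "j \<in> B"
  show "c1 p * x ^ f1 p * y ^ g1 p * (c2 i * x ^ f2 i * y ^ g2 i) * (c3 j * x ^ f3 j * y ^ g3 j) =
         c1 p * c2 i * c3 j * x ^ E p i j * y ^ F p i j"
  proof (cases "c1 p * c2 i * c3 j = 0")
    case True
    then show ?thesis by auto
  next
    case False
    with assms h have "f1 p + f2 i + f3 j = E p i j" "g1 p + g2 i + g3 j = F p i j" by blast+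
    then show ?thesis by (simp add: power_add[symmetric] algebra_simps)
  qed
qed

lemma sum6: "(\<Sum>p\<in>A. \<Sum>i\<in>B. \<Sum>j\<in>B. f1 p i j) - (\<Sum>p\<in>A. \<Sum>i\<in>B. \<Sum>j\<in>B. f2 p i j)
   + (\<Sum>p\<in>A. \<Sum>i\<in>B. \<Sum>j\<in>B. f3 p i j) - (\<Sum>p\<in>A. \<Sum>i\<in>B. \<Sum>j\<in>B. f4 p i j)
   + (\<Sum>p\<in>A. \<Sum>i\<in>B. \<Sum>j\<in>B. f5 p i j) - (\<Sum>p\<in>A. \<Sum>i\<in>B. \<Sum>j\<in>B. f6 p i j)
   = (\<Sum>p\<in>A. \<Sum>i\<in>B. \<Sum>j\<in>B. f1 p i j - f2 p i j + f3 p i j - f4 p i j + f5 p i j - f6 p i j)"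
  for f1 f2 f3 f4 f5 f6 :: "nat \<Rightarrow> nat \<Rightarrow> nat \<Rightarrow> complex"
  by (simp add: sum_subtractf sum.distrib)

definition t111 :: "nat \<Rightarrow> nat \<Rightarrow> complex" where "t111 d i = of_nat i * of_nat (i-1) * of_nat (i-1-1)"
definition t112 :: "nat \<Rightarrow> nat \<Rightarrow> complex" where "t112 d i = of_nat i * of_nat (i-1) * of_nat (d-i)"
definition t122 :: "nat \<Rightarrow> nat \<Rightarrow> complex" where "t122 d i = of_nat i * of_nat (d-i) * of_nat (d-i-1)"
definition t222 :: "nat \<Rightarrow> nat \<Rightarrow> complex" where "t222 d i = of_nat (d-i) * of_nat (d-i-1) * of_nat (d-i-1-1)"

definition W :: "nat \<Rightarrow> nat \<Rightarrow> nat \<Rightarrow> nat \<Rightarrow> nat \<Rightarrow> complex" where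
  "W d e p i j =
     (of_nat p * of_nat (p-1)) * (t112 d i * t222 d j - t122 d i * t122 d j)
   + (of_nat p * of_nat (e-p)) * (t112 d i * t122 d j - t111 d i * t222 d j)
   + (of_nat (e-p) * of_nat (e-p-1)) * (t111 d i * t122 d j - t112 d i * t112 d j)"

definition M :: "nat \<Rightarrow> nat \<Rightarrow> (nat \<Rightarrow> complex) \<Rightarrow> nat \<Rightarrow> nat \<Rightarrow> complex" where
  "M d e a k p = (\<Sum>i\<le>d. \<Sum>j\<le>d. if k = p + i + j - 4 then a i * a j * W d e p i j else 0)"

lemma group3:
  fixes x y :: complex
  assumes "\<And>p i j. p \<in> A \<Longrightarrow> i \<in> B \<Longrightarrow> j \<in> B \<Longrightarrow> E p i j \<le> K'"
    and fin: "finite A" "finite B"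
  shows "(\<Sum>p\<in>A. \<Sum>i\<in>B. \<Sum>j\<in>B. G p i j * x ^ E p i j * y ^ (K - E p i j)) =
    (\<Sum>k\<le>K'. (\<Sum>p\<in>A. \<Sum>i\<in>B. \<Sum>j\<in>B. if k = E p i j then G p i j else 0) * x ^ k * y ^ (K - k))"
proof -
  have "(\<Sum>k\<le>K'. (\<Sum>p\<in>A. \<Sum>i\<in>B. \<Sum>j\<in>B. if k = E p i j then G p i j else 0) * x ^ k * y ^ (K - k))
     = (\<Sum>k\<le>K'. \<Sum>p\<in>A. \<Sum>i\<in>B. \<Sum>j\<in>B. if k = E p i j then G p i j * x ^ E p i j * y ^ (K - E p i j) else 0)"
    unfolding mult.assoc[of _ "x ^ _"] sum3_mult by (intro sum.cong refl) auto
  also have "\<dots> = (\<Sum>p\<in>A. \<Sum>i\<in>B. \<Sum>j\<in>B. G p i j * x ^ E p i j * y ^ (K - E p i j))"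
    apply (subst sum.swap[where A = "{..K'}" and B = A])
    apply (rule sum.cong[OF refl])
    apply (subst sum.swap[where A = "{..K'}" and B = B])
    apply (rule sum.cong[OF refl])
    apply (subst sum.swap[where A = "{..K'}" and B = B])
    apply (rule sum.cong[OF refl])
    using assms(1) by (simp add: sum.delta)
  finally show ?thesis by simp
qed


lemma Top_expand: "Top a h x y =
    D1 (D1 h) x y * D2 (D1 (D1 a)) x y * D2 (D2 (D2 a)) x y
  - D1 (D1 h) x y * D2 (D2 (D1 a)) x y * D2 (D2 (D1 a)) x y
  + D2 (D1 h) x y * D2 (D1 (D1 a)) x y * D2 (D2 (D1 a)) x y
  - D2 (D1 h) x y * D1 (D1 (D1 a)) x y * D2 (D2 (D2 a)) x y
  + D2 (D2 h) x y * D1 (D1 (D1 a)) x y * D2 (D2 (D1 a)) x y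
  - D2 (D2 h) x y * D2 (D1 (D1 a)) x y * D2 (D1 (D1 a)) x y"
  by (simp add: Top_def Let_def power2_eq_square algebra_simps)

lemma KEY:
  assumes d4: "d \<ge> 4"
  shows "Top (bform d a) (bform e b) x y =
    (\<Sum>k\<le>e+2*d. (\<Sum>p\<le>e. b p * M d e a k p) * x ^ k * y ^ (e + 2*d - 8 - k))"
proof -
  define K where "K = e + 2*d - 8"
  define E where "E = (\<lambda>p i j::nat. p + i + j - 4)"
  have h11: "D1 (D1 (bform e b)) = ms {..e} (\<lambda>p. b p * of_nat p * of_nat (p-1)) (\<lambda>p. p-1-1) (\<lambda>p. e-p)"
    by (simp only: bform_ms D1_ms)
  have h12: "D2 (D1 (bform e b)) = ms {..e} (\<lambda>p. b p * of_nat p * of_nat (e-p)) (\<lambda>p. p-1) (\<lambda>p. e-p-1)"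
    by (simp only: bform_ms D1_ms D2_ms)
  have h22: "D2 (D2 (bform e b)) = ms {..e} (\<lambda>p. b p * of_nat (e-p) * of_nat (e-p-1)) (\<lambda>p. p) (\<lambda>p. e-p-1-1)"
    by (simp only: bform_ms D2_ms)
  have a111: "D1 (D1 (D1 (bform d a))) = ms {..d} (\<lambda>i. a i * of_nat i * of_nat (i-1) * of_nat (i-1-1)) (\<lambda>i. i-1-1-1) (\<lambda>i. d-i)"
    by (simp only: bform_ms D1_ms)
  have a112: "D2 (D1 (D1 (bform d a))) = ms {..d} (\<lambda>i. a i * of_nat i * of_nat (i-1) * of_nat (d-i)) (\<lambda>i. i-1-1) (\<lambda>i. d-i-1)"
    by (simp only: bform_ms D1_ms D2_ms)
  have a122: "D2 (D2 (D1 (bform d a))) = ms {..d} (\<lambda>i. a i * of_nat i * of_nat (d-i) * of_nat (d-i-1)) (\<lambda>i. i-1) (\<lambda>i. d-i-1-1)"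
    by (simp only: bform_ms D1_ms D2_ms)
  have a222: "D2 (D2 (D2 (bform d a))) = ms {..d} (\<lambda>i. a i * of_nat (d-i) * of_nat (d-i-1) * of_nat (d-i-1-1)) (\<lambda>i. i) (\<lambda>i. d-i-1-1-1)"
    by (simp only: bform_ms D2_ms)
  note defs = h11 h12 h22 a111 a112 a122 a222
  have T1: "D1 (D1 (bform e b)) x y * D2 (D1 (D1 (bform d a))) x y * D2 (D2 (D2 (bform d a))) x y
    = (\<Sum>p\<in>{..e}. \<Sum>i\<in>{..d}. \<Sum>j\<in>{..d}. (b p * of_nat p * of_nat (p-1)) * (a i * of_nat i * of_nat (i-1) * of_nat (d-i))
         * (a j * of_nat (d-j) * of_nat (d-j-1) * of_nat (d-j-1-1)) * x ^ E p i j * y ^ (K - E p i j))"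
    unfolding defs by (rule ms3) (use d4 in \<open>auto simp: E_def K_def\<close>)
  have T2: "D1 (D1 (bform e b)) x y * D2 (D2 (D1 (bform d a))) x y * D2 (D2 (D1 (bform d a))) x y
    = (\<Sum>p\<in>{..e}. \<Sum>i\<in>{..d}. \<Sum>j\<in>{..d}. (b p * of_nat p * of_nat (p-1)) * (a i * of_nat i * of_nat (d-i) * of_nat (d-i-1))
         * (a j * of_nat j * of_nat (d-j) * of_nat (d-j-1)) * x ^ E p i j * y ^ (K - E p i j))"
    unfolding defs by (rule ms3) (use d4 in \<open>auto simp: E_def K_def\<close>)
  have T3: "D2 (D1 (bform e b)) x y * D2 (D1 (D1 (bform d a))) x y * D2 (D2 (D1 (bform d a))) x y
    = (\<Sum>p\<in>{..e}. \<Sum>i\<in>{..d}. \<Sum>j\<in>{..d}. (b p * of_nat p * of_nat (e-p)) * (a i * of_nat i * of_nat (i-1) * of_nat (d-i))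
         * (a j * of_nat j * of_nat (d-j) * of_nat (d-j-1)) * x ^ E p i j * y ^ (K - E p i j))"
    unfolding defs by (rule ms3) (use d4 in \<open>auto simp: E_def K_def\<close>)
  have T4: "D2 (D1 (bform e b)) x y * D1 (D1 (D1 (bform d a))) x y * D2 (D2 (D2 (bform d a))) x y
    = (\<Sum>p\<in>{..e}. \<Sum>i\<in>{..d}. \<Sum>j\<in>{..d}. (b p * of_nat p * of_nat (e-p)) * (a i * of_nat i * of_nat (i-1) * of_nat (i-1-1))
         * (a j * of_nat (d-j) * of_nat (d-j-1) * of_nat (d-j-1-1)) * x ^ E p i j * y ^ (K - E p i j))"
    unfolding defs by (rule ms3) (use d4 in \<open>auto simp: E_def K_def\<close>)
  have T5: "D2 (D2 (bform e b)) x y * D1 (D1 (D1 (bform d a))) x y * D2 (D2 (D1 (bform d a))) x y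
    = (\<Sum>p\<in>{..e}. \<Sum>i\<in>{..d}. \<Sum>j\<in>{..d}. (b p * of_nat (e-p) * of_nat (e-p-1)) * (a i * of_nat i * of_nat (i-1) * of_nat (i-1-1))
         * (a j * of_nat j * of_nat (d-j) * of_nat (d-j-1)) * x ^ E p i j * y ^ (K - E p i j))"
    unfolding defs by (rule ms3) (use d4 in \<open>auto simp: E_def K_def\<close>)
  have T6: "D2 (D2 (bform e b)) x y * D2 (D1 (D1 (bform d a))) x y * D2 (D1 (D1 (bform d a))) x y
    = (\<Sum>p\<in>{..e}. \<Sum>i\<in>{..d}. \<Sum>j\<in>{..d}. (b p * of_nat (e-p) * of_nat (e-p-1)) * (a i * of_nat i * of_nat (i-1) * of_nat (d-i))
         * (a j * of_nat j * of_nat (j-1) * of_nat (d-j)) * x ^ E p i j * y ^ (K - E p i j))"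
    unfolding defs by (rule ms3) (use d4 in \<open>auto simp: E_def K_def\<close>)
  have "Top (bform d a) (bform e b) x y =
     (\<Sum>p\<in>{..e}. \<Sum>i\<in>{..d}. \<Sum>j\<in>{..d}. (b p * a i * a j * W d e p i j) * x ^ E p i j * y ^ (K - E p i j))"
    unfolding Top_expand T1 T2 T3 T4 T5 T6 sum6
    by (intro sum.cong refl) (simp add: W_def t111_def t112_def t122_def t222_def algebra_simps)
  also have "\<dots> = (\<Sum>k\<le>e+2*d. (\<Sum>p\<in>{..e}. \<Sum>i\<in>{..d}. \<Sum>j\<in>{..d}. if k = E p i j then b p * a i * a j * W d e p i j else 0) * x ^ k * y ^ (K - k))"
    by (rule group3) (auto simp: E_def)
  also have "\<dots> = (\<Sum>k\<le>e+2*d. (\<Sum>p\<le>e. b p * M d e a k p) * x ^ k * y ^ (K - k))"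
    unfolding M_def E_def sum_distrib_left
    by (intro sum.cong refl arg_cong2[where f = "(*)"]) auto
  finally show ?thesis unfolding K_def .
qed

lemma KEY_iff:
  assumes d4: "d \<ge> 4"
  shows "(\<forall>x y. Top (bform d a) (bform e b) x y = 0) \<longleftrightarrow>
    (\<forall>k\<le>e+2*d. (\<Sum>p\<le>e. b p * M d e a k p) = 0)"
proof
  assume h: "\<forall>x y. Top (bform d a) (bform e b) x y = 0"
  have "\<forall>x. (\<Sum>k\<le>e+2*d. (\<Sum>p\<le>e. b p * M d e a k p) * x ^ k) = 0"
  proof
    fix x :: complex
    have "Top (bform d a) (bform e b) x 1 = 0" using h by blast
    then show "(\<Sum>k\<le>e+2*d. (\<Sum>p\<le>e. b p * M d e a k p) * x ^ k) = 0"
      unfolding KEY[OF d4] by simp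
  qed
  then show "\<forall>k\<le>e+2*d. (\<Sum>p\<le>e. b p * M d e a k p) = 0"
    by (simp only: polyfun_eq_0)
next
  assume "\<forall>k\<le>e+2*d. (\<Sum>p\<le>e. b p * M d e a k p) = 0"
  then show "\<forall>x y. Top (bform d a) (bform e b) x y = 0"
    unfolding KEY[OF d4] by (intro allI sum.neutral) auto
qed

lemma bform_zero: "(\<forall>x y. bform n c x y = 0) \<longleftrightarrow> (\<forall>i\<le>n. c i = 0)"
proof
  assume h: "\<forall>x y. bform n c x y = 0"
  have "\<forall>x. (\<Sum>i\<le>n. c i * x ^ i) = 0"
  proof
    fix x :: complex
    show "(\<Sum>i\<le>n. c i * x ^ i) = 0" using h[rule_format, of x 1] by (simp add: bform_def)
  qed
  then show "\<forall>i\<le>n. c i = 0" using polyfun_eq_0 by blast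
qed (simp add: bform_def)

lemma bform_diff: "bform n c x y - bform n c' x y = bform n (\<lambda>i. c i - c' i) x y"
  by (simp add: bform_def sum_subtractf algebra_simps)

lemma bform_eqD: assumes "bform n c = bform n c'" shows "\<forall>i\<le>n. c i = c' i"
proof -
  have "\<forall>x y. bform n (\<lambda>i. c i - c' i) x y = 0" using assms by (simp flip: bform_diff)
  then show ?thesis unfolding bform_zero by simp
qed

lemma bform_lin: "s * bform n c x y + t * bform n c' x y = bform n (\<lambda>i. s * c i + t * c' i) x y"
  by (simp add: bform_def sum_distrib_left sum.distrib algebra_simps)

lemma D1_bform: assumes "d \<ge> 1"
  shows "D1 (bform d a) = bform (d-1) (\<lambda>i. of_nat (i+1) * a (i+1))"
proof -
  obtain m where m: "d = Suc m" using assms by (cases d) auto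
  show ?thesis
  proof (intro ext)
    fix x y
    show "D1 (bform d a) x y = bform (d-1) (\<lambda>i. of_nat (i+1) * a (i+1)) x y"
      unfolding bform_ms D1_ms unfolding m ms_def
      by (subst sum.atMost_Suc_shift) (simp add: mult_ac)
  qed
qed

lemma D2_bform: assumes "d \<ge> 1"
  shows "D2 (bform d a) = bform (d-1) (\<lambda>i. of_nat (d-i) * a i)"
proof -
  obtain m where m: "d = Suc m" using assms by (cases d) auto
  show ?thesis unfolding bform_ms D2_ms m
    by (auto simp: ms_def intro!: ext sum.cong)
qed

lemma Top_D1: "Top a (D1 a) x y = 0"
  by (simp add: Top_def Let_def power2_eq_square algebra_simps)

lemma comm_facts:
  "D1 (D2 (bform d a)) = D2 (D1 (bform d a))"
  "D1 (D2 (D1 (bform d a))) = D2 (D1 (D1 (bform d a)))"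
  "D1 (D2 (D2 (bform d a))) = D2 (D1 (D2 (bform d a)))"
  by (simp_all add: bform_ms D1_ms D2_ms mult_ac)

lemma Top_D2: "Top (bform d a) (D2 (bform d a)) x y = 0"
proof -
  have "D1 (D1 (D2 (bform d a))) = D2 (D1 (D1 (bform d a)))"
    unfolding comm_facts(1) comm_facts(2) ..
  moreover have "D2 (D1 (D2 (bform d a))) = D2 (D2 (D1 (bform d a)))"
    unfolding comm_facts(1) ..
  ultimately show ?thesis
    by (simp add: Top_def Let_def power2_eq_square algebra_simps)
qed

lemma Top_self:
  assumes d4: "d \<ge> 4"
  shows "Top (bform d a) (bform d a) x y = 0"
proof -
  let ?al = "bform d a"
  let ?a111 = "D1 (D1 (D1 ?al)) x y" and ?a112 = "D2 (D1 (D1 ?al)) x y"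
  let ?a122 = "D2 (D2 (D1 ?al)) x y" and ?a222 = "D2 (D2 (D2 ?al)) x y"
  have e11: "x * ?a111 + y * ?a112 = of_nat (d-2) * D1 (D1 ?al) x y"
  proof -
    have "D1 (D1 ?al) = ms {..d} (\<lambda>i. a i * of_nat i * of_nat (i-1)) (\<lambda>i. i-1-1) (\<lambda>i. d-i)"
      by (simp only: bform_ms D1_ms)
    moreover have "x * D1 (ms {..d} (\<lambda>i. a i * of_nat i * of_nat (i-1)) (\<lambda>i. i-1-1) (\<lambda>i. d-i)) x y
      + y * D2 (ms {..d} (\<lambda>i. a i * of_nat i * of_nat (i-1)) (\<lambda>i. i-1-1) (\<lambda>i. d-i)) x y
      = of_nat (d-2) * ms {..d} (\<lambda>i. a i * of_nat i * of_nat (i-1)) (\<lambda>i. i-1-1) (\<lambda>i. d-i) x y"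
      by (rule euler_ms) auto
    ultimately show ?thesis by simp
  qed
  have e12: "x * ?a112 + y * ?a122 = of_nat (d-2) * D2 (D1 ?al) x y"
  proof -
    have "D2 (D1 ?al) = ms {..d} (\<lambda>i. a i * of_nat i * of_nat (d-i)) (\<lambda>i. i-1) (\<lambda>i. d-i-1)"
      by (simp only: bform_ms D1_ms D2_ms)
    moreover have "x * D1 (ms {..d} (\<lambda>i. a i * of_nat i * of_nat (d-i)) (\<lambda>i. i-1) (\<lambda>i. d-i-1)) x y
      + y * D2 (ms {..d} (\<lambda>i. a i * of_nat i * of_nat (d-i)) (\<lambda>i. i-1) (\<lambda>i. d-i-1)) x y
      = of_nat (d-2) * ms {..d} (\<lambda>i. a i * of_nat i * of_nat (d-i)) (\<lambda>i. i-1) (\<lambda>i. d-i-1) x y"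
      by (rule euler_ms) auto
    ultimately show ?thesis unfolding comm_facts(2)[symmetric] by simp
  qed
  have e22: "x * ?a122 + y * ?a222 = of_nat (d-2) * D2 (D2 ?al) x y"
  proof -
    have "D2 (D2 ?al) = ms {..d} (\<lambda>i. a i * of_nat (d-i) * of_nat (d-i-1)) (\<lambda>i. i) (\<lambda>i. d-i-1-1)"
      by (simp only: bform_ms D2_ms)
    moreover have "x * D1 (ms {..d} (\<lambda>i. a i * of_nat (d-i) * of_nat (d-i-1)) (\<lambda>i. i) (\<lambda>i. d-i-1-1)) x y
      + y * D2 (ms {..d} (\<lambda>i. a i * of_nat (d-i) * of_nat (d-i-1)) (\<lambda>i. i) (\<lambda>i. d-i-1-1)) x y
      = of_nat (d-2) * ms {..d} (\<lambda>i. a i * of_nat (d-i) * of_nat (d-i-1)) (\<lambda>i. i) (\<lambda>i. d-i-1-1) x y"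
      by (rule euler_ms) auto
    moreover have "D1 (D2 (D2 ?al)) = D2 (D2 (D1 ?al))" unfolding comm_facts(3) comm_facts(1) ..
    ultimately show ?thesis by simp
  qed
  have "of_nat (d-2) * Top ?al ?al x y =
      (of_nat (d-2) * D1 (D1 ?al) x y) * (?a112 * ?a222 - ?a122^2)
    + (of_nat (d-2) * D2 (D1 ?al) x y) * (?a112 * ?a122 - ?a111 * ?a222)
    + (of_nat (d-2) * D2 (D2 ?al) x y) * (?a111 * ?a122 - ?a112^2)"
    by (simp add: Top_def Let_def algebra_simps)
  also have "\<dots> = (x * ?a111 + y * ?a112) * (?a112 * ?a222 - ?a122^2)
    + (x * ?a112 + y * ?a122) * (?a112 * ?a122 - ?a111 * ?a222)
    + (x * ?a122 + y * ?a222) * (?a111 * ?a122 - ?a112^2)"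
    by (simp only: e11 e12 e22)
  also have "\<dots> = 0" by (simp add: power2_eq_square algebra_simps)
  finally have "of_nat (d-2) * Top ?al ?al x y = 0" .
  moreover have "of_nat (d-2) \<noteq> (0::complex)"
  proof
    assume "of_nat (d-2) = (0::complex)"
    then have "d - 2 = 0" by (simp only: of_nat_eq_0_iff)
    with d4 show False by simp
  qed
  ultimately show ?thesis by simp
qed

lemma poly_fun_gen:
  assumes "finite S"
  shows "poly_fun n (\<lambda>c. \<Sum>s\<in>S. cf s * (\<Prod>i\<le>n. c i ^ E s i))"
proof -
  define coef where "coef m = (\<Sum>s\<in>{s\<in>S. E s = m}. cf s)" for m
  have "(\<lambda>c. \<Sum>s\<in>S. cf s * (\<Prod>i\<le>n. c i ^ E s i)) = (\<lambda>c. \<Sum>m\<in>E ` S. coef m * (\<Prod>i\<le>n. c i ^ m i))"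
  proof (intro ext)
    fix c :: "nat \<Rightarrow> complex"
    have "(\<Sum>m\<in>E ` S. coef m * (\<Prod>i\<le>n. c i ^ m i)) =
        (\<Sum>m\<in>E ` S. \<Sum>s\<in>{s\<in>S. E s = m}. cf s * (\<Prod>i\<le>n. c i ^ E s i))"
      unfolding coef_def sum_distrib_right by (intro sum.cong refl) auto
    also have "\<dots> = (\<Sum>s\<in>S. cf s * (\<Prod>i\<le>n. c i ^ E s i))"
      by (rule sum.group) (use assms in auto)
    finally show "(\<Sum>s\<in>S. cf s * (\<Prod>i\<le>n. c i ^ E s i)) = (\<Sum>m\<in>E ` S. coef m * (\<Prod>i\<le>n. c i ^ m i))" by simp
  qed
  then show ?thesis unfolding poly_fun_def using assms by blast
qed

lemma poly_fun_const: "poly_fun n (\<lambda>c. k)"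
  using poly_fun_gen[of "{()}" n "\<lambda>_. k" "\<lambda>_ _. 0"] by simp

lemma poly_fun_var: assumes "j \<le> n" shows "poly_fun n (\<lambda>c. c j)"
proof -
  have "(\<Prod>i\<le>n. c i ^ (if i = j then 1 else 0)) = c j" for c :: "nat \<Rightarrow> complex"
  proof -
    have "(\<Prod>i\<le>n. c i ^ (if i = j then 1 else 0)) = (\<Prod>i\<le>n. if i = j then c i else 1)"
      by (intro prod.cong) auto
    also have "\<dots> = c j" using assms by (simp add: prod.delta)
    finally show ?thesis .
  qed
  then show ?thesis
    using poly_fun_gen[of "{()}" n "\<lambda>_. 1" "\<lambda>_ i. if i = j then 1 else 0"] by simp
qed

lemma poly_fun_add: assumes "poly_fun n P" "poly_fun n Q" shows "poly_fun n (\<lambda>c. P c + Q c)"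
proof -
  obtain M1 coef1 where 1: "finite M1" "P = (\<lambda>c. \<Sum>m\<in>M1. coef1 m * (\<Prod>i\<le>n. c i ^ m i))"
    using assms(1) unfolding poly_fun_def by blast
  obtain M2 coef2 where 2: "finite M2" "Q = (\<lambda>c. \<Sum>m\<in>M2. coef2 m * (\<Prod>i\<le>n. c i ^ m i))"
    using assms(2) unfolding poly_fun_def by blast
  define cf :: "(nat\<Rightarrow>nat) + (nat\<Rightarrow>nat) \<Rightarrow> complex" where "cf x = (case x of Inl m \<Rightarrow> coef1 m | Inr m \<Rightarrow> coef2 m)" for x
  define E :: "(nat\<Rightarrow>nat) + (nat\<Rightarrow>nat) \<Rightarrow> nat \<Rightarrow> nat" where "E x = (case x of Inl m \<Rightarrow> m | Inr m \<Rightarrow> m)" for x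
  have "(\<lambda>c. P c + Q c) = (\<lambda>c. \<Sum>x\<in>M1 <+> M2. cf x * (\<Prod>i\<le>n. c i ^ E x i))"
    using 1 2 by (simp add: sum.Plus cf_def E_def comp_def)
  then show ?thesis using poly_fun_gen[of "M1 <+> M2" n cf E] 1 2 by simp
qed

lemma poly_fun_mult: assumes "poly_fun n P" "poly_fun n Q" shows "poly_fun n (\<lambda>c. P c * Q c)"
proof -
  obtain M1 coef1 where 1: "finite M1" "P = (\<lambda>c. \<Sum>m\<in>M1. coef1 m * (\<Prod>i\<le>n. c i ^ m i))"
    using assms(1) unfolding poly_fun_def by blast
  obtain M2 coef2 where 2: "finite M2" "Q = (\<lambda>c. \<Sum>m\<in>M2. coef2 m * (\<Prod>i\<le>n. c i ^ m i))"
    using assms(2) unfolding poly_fun_def by blast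
  have "(\<lambda>c. P c * Q c) = (\<lambda>c. \<Sum>x\<in>M1 \<times> M2. (coef1 (fst x) * coef2 (snd x)) * (\<Prod>i\<le>n. c i ^ (fst x i + snd x i)))"
  proof (intro ext)
    fix c :: "nat \<Rightarrow> complex"
    show "P c * Q c = (\<Sum>x\<in>M1 \<times> M2. (coef1 (fst x) * coef2 (snd x)) * (\<Prod>i\<le>n. c i ^ (fst x i + snd x i)))"
      unfolding 1 2 sum_product sum.cartesian_product
      by (intro sum.cong refl) (auto simp: power_add prod.distrib mult_ac)
  qed
  then show ?thesis using poly_fun_gen[of "M1 \<times> M2" n "\<lambda>x. coef1 (fst x) * coef2 (snd x)" "\<lambda>x i. fst x i + snd x i"] 1 2
    by simp
qed

lemma poly_fun_sum: assumes "finite S" "\<And>s. s \<in> S \<Longrightarrow> poly_fun n (P s)"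
  shows "poly_fun n (\<lambda>c. \<Sum>s\<in>S. P s c)"
  using assms
proof (induction S rule: finite_induct)
  case empty
  then show ?case using poly_fun_const[of n 0] by simp
next
  case (insert x F)
  then show ?case using poly_fun_add[of n "P x" "\<lambda>c. \<Sum>s\<in>F. P s c"] by simp
qed

lemma poly_fun_prod: assumes "finite S" "\<And>s. s \<in> S \<Longrightarrow> poly_fun n (P s)"
  shows "poly_fun n (\<lambda>c. \<Prod>s\<in>S. P s c)"
  using assms
proof (induction S rule: finite_induct)
  case empty
  then show ?case using poly_fun_const[of n 1] by simp
next
  case (insert x F)
  then show ?case using poly_fun_mult[of n "P x" "\<lambda>c. \<Prod>s\<in>F. P s c"] by simp
qed

lemma poly_fun_M: "poly_fun d (\<lambda>a. M d e a k p)"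
  unfolding M_def
proof (intro poly_fun_sum)
  fix i j assume "i \<in> {..d}" "j \<in> {..d}"
  then show "poly_fun d (\<lambda>a. if k = p + i + j - 4 then a i * a j * W d e p i j else 0)"
    by (cases "k = p + i + j - 4")
       (auto intro!: poly_fun_mult poly_fun_var poly_fun_const simp: poly_fun_const)
qed auto

lemma Q_nz:
  fixes p q m :: int
  assumes m2: "m \<ge> 2" and p0: "p \<ge> 0" and q0: "q \<ge> 0" and pq: "p + q \<ge> 2"
    and n1: "\<not> (p = 1 \<and> q = m)" and n2: "\<not> (p = 2 \<and> q = m - 1)" and n3: "\<not> (p = 2 \<and> q = m)"
  shows "m*(m-1)*p*(p-1) - 2*(m-1)*p*q + 2*q*(q-1) \<noteq> 0"
proof -
  consider "p = 0" | "p = 1" | "p = 2" | "p \<ge> 3" using p0 by linarith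
  then show ?thesis
  proof cases
    case 1
    then have q2: "q \<ge> 2" using pq by simp
    have "q * (q - 1) > 0" using q2 by (intro mult_pos_pos) auto
    then show ?thesis using 1 q2 by simp
  next
    case 2
    then have "m*(m-1)*p*(p-1) - 2*(m-1)*p*q + 2*q*(q-1) = 2 * q * (q - m)"
      by (simp add: algebra_simps)
    moreover have "q \<noteq> 0" using pq 2 by simp
    moreover have "q - m \<noteq> 0" using n1 2 by simp
    ultimately show ?thesis by simp
  next
    case 3
    then have "m*(m-1)*p*(p-1) - 2*(m-1)*p*q + 2*q*(q-1) = 2 * (q - m) * (q - m + 1)"
      by (simp add: algebra_simps)
    moreover have "q - m \<noteq> 0" using n3 3 by simp
    moreover have "q - m + 1 \<noteq> 0" using n2 3 by simp
    ultimately show ?thesis by simp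
  next
    case 4
    have e: "8 * (m*(m-1)*p*(p-1) - 2*(m-1)*p*q + 2*q*(q-1)) =
        (4*q - 2*((m-1)*p+1))^2 + 4*(((m-1)*(m+1))*(p*(p-2)) - 1)"
      by (simp add: algebra_simps power2_eq_square)
    have a: "(m-1)*(m+1) \<ge> 1 * 3" using m2 by (intro mult_mono) auto
    have b: "p*(p-2) \<ge> 3 * 1" using 4 by (intro mult_mono) auto
    have "((m-1)*(m+1))*(p*(p-2)) \<ge> 3 * 3" using a b by (intro mult_mono) auto
    then have "8 * (m*(m-1)*p*(p-1) - 2*(m-1)*p*q + 2*q*(q-1)) > 0"
      unfolding e by (smt (verit) zero_le_power2)
    then show ?thesis by auto
  qed
qed

lemma ofnat_pp1: "(of_nat n * of_nat (n - 1) :: complex) = of_int (int n * (int n - 1))"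
  by (cases n) auto

lemma W_ring: fixes D pa pb r qa qb :: complex shows
  "pa * pb * (2 * D * (D * (D - 1) * (D - 2)) - 2 * D * (D - 1) * (2 * D * (D - 1)))
   + pa * r * (2 * D * (2 * D * (D - 1))) + qa * qb * (0 - 2 * D * (2 * D))
  = -2 * D^2 * (D * (D - 1) * (pa * pb) - 2 * (D - 1) * (pa * r) + 2 * (qa * qb))"
  by (simp add: algebra_simps power2_eq_square)

lemma W22:
  assumes d4: "d \<ge> 4"
  shows "W d e p 2 2 = -2 * (of_nat (d-2))^2 *
     ((of_nat (d-2)) * (of_nat (d-2) - 1) * (of_nat p * of_nat (p-1))
      - 2 * (of_nat (d-2) - 1) * (of_nat p * of_nat (e-p))
      + 2 * (of_nat (e-p) * of_nat (e-p-1)))"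
proof -
  have f2: "(of_nat (d-2-1) :: complex) = of_nat (d-2) - 1" using d4 by (simp add: of_nat_diff)
  have f3: "(of_nat (d-2-1-1) :: complex) = of_nat (d-2) - 2" using d4 by (simp add: of_nat_diff)
  have "W d e p 2 2 =
     (of_nat p * of_nat (p-1)) * ((2 * of_nat (d-2)) * (of_nat (d-2) * of_nat (d-2-1) * of_nat (d-2-1-1))
         - (2 * of_nat (d-2) * of_nat (d-2-1)) * (2 * of_nat (d-2) * of_nat (d-2-1)))
   + (of_nat p * of_nat (e-p)) * ((2 * of_nat (d-2)) * (2 * of_nat (d-2) * of_nat (d-2-1)))
   + (of_nat (e-p) * of_nat (e-p-1)) * (0 - (2 * of_nat (d-2)) * (2 * of_nat (d-2)))"
    by (simp add: W_def t111_def t112_def t122_def t222_def numeral_2_eq_2)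
  also have "\<dots> = -2 * (of_nat (d-2))^2 *
     ((of_nat (d-2)) * (of_nat (d-2) - 1) * (of_nat p * of_nat (p-1))
      - 2 * (of_nat (d-2) - 1) * (of_nat p * of_nat (e-p))
      + 2 * (of_nat (e-p) * of_nat (e-p-1)))"
    unfolding f2 f3 by (rule W_ring)
  finally show ?thesis .
qed

lemma W22_int:
  assumes d4: "d \<ge> 4" and pe: "p \<le> e"
  shows "W d e p 2 2 = of_int (-2 * (int d - 2)^2 *
     ((int d - 2)*(int d - 2 - 1)*(int p * (int p - 1)) - 2*(int d - 2 - 1)*(int p * int (e-p))
       + 2*(int (e-p) * (int (e-p) - 1))))"
proof -
  have f1: "(of_nat (d-2) :: complex) = of_int (int d - 2)" using d4 by (simp add: of_nat_diff)
  have f4: "(of_nat p * of_nat (e-p) :: complex) = of_int (int p * int (e-p))" by simp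
  show ?thesis
    unfolding W22[OF d4] ofnat_pp1 ofnat_pp1[of "e-p"] f4 unfolding f1
    by (simp only: of_int_mult of_int_add of_int_diff of_int_power of_int_numeral of_int_minus of_int_1)
qed

definition delta2 :: "nat \<Rightarrow> complex" where "delta2 i = (if i = 2 then 1 else 0)"

lemma M_delta:
  assumes d4: "d \<ge> 4"
  shows "M d e delta2 k p = (if k = p then W d e p 2 2 else 0)"
proof -
  have "M d e delta2 k p = (\<Sum>i\<le>d. \<Sum>j\<le>d. if i = 2 then (if j = 2 then (if k = p then W d e p 2 2 else 0) else 0) else 0)"
    unfolding M_def delta2_def by (intro sum.cong refl) auto
  also have "\<dots> = (\<Sum>i\<le>d. if i = 2 then (if k = p then W d e p 2 2 else 0) else 0)"
  proof (intro sum.cong refl)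
    fix i
    show "(\<Sum>j\<le>d. if i = 2 then (if j = 2 then (if k = p then W d e p 2 2 else 0) else 0) else 0) =
       (if i = 2 then (if k = p then W d e p 2 2 else 0) else 0)"
      using d4 by (cases "i = 2") (simp_all add: sum.delta)
  qed
  also have "\<dots> = (if k = p then W d e p 2 2 else 0)"
    using d4 by (simp add: sum.delta)
  finally show ?thesis .
qed

definition sel :: "nat \<Rightarrow> nat \<Rightarrow> nat \<Rightarrow> nat" where "sel t w r = (if r < t then r else r + w)"

lemma sel_inj: "inj (sel t w)"
  unfolding inj_def sel_def by auto

lemma sel_image: assumes "t \<le> n" shows "sel t w ` {..<n} = {..<n+w} - {t..<t+w}"
proof
  show "sel t w ` {..<n} \<subseteq> {..<n + w} - {t..<t + w}"
    using assms by (auto simp: sel_def)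
next
  show "{..<n + w} - {t..<t + w} \<subseteq> sel t w ` {..<n}"
  proof
    fix p assume p: "p \<in> {..<n + w} - {t..<t + w}"
    show "p \<in> sel t w ` {..<n}"
    proof (cases "p < t")
      case True
      then have "sel t w p = p" by (simp add: sel_def)
      moreover have "p < n" using True assms by simp
      ultimately show ?thesis by (metis imageI lessThan_iff)
    next
      case False
      then have "p \<ge> t + w" using p by auto
      then have "sel t w (p - w) = p" "p - w < n" using p by (auto simp: sel_def)
      then show ?thesis by (metis imageI lessThan_iff)
    qed
  qed
qed

lemma inj_sub:
  fixes Mf :: "nat \<Rightarrow> nat \<Rightarrow> complex"
  assumes det: "Determinant.det (mat n n (\<lambda>(r,s). Mf (sel t w r) (sel t w s))) \<noteq> 0"
    and tn: "t \<le> n" and ne: "n + w = e + 1"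
    and rows: "\<And>r. r < n \<Longrightarrow> (\<Sum>p\<le>e. v p * Mf (sel t w r) p) = 0"
    and rem: "\<And>p. t \<le> p \<Longrightarrow> p < t + w \<Longrightarrow> v p = 0"
    and pe: "p \<le> e"
  shows "v p = 0"
proof -
  define A where "A = mat n n (\<lambda>(r,s). Mf (sel t w r) (sel t w s))"
  define vv where "vv = vec n (\<lambda>s. v (sel t w s))"
  have A: "A \<in> carrier_mat n n" unfolding A_def by simp
  have img: "sel t w ` {0..<n} = {..e} - {t..<t+w}"
    using sel_image[OF tn, of w] ne by (simp add: atLeast0LessThan lessThan_Suc_atMost[symmetric])
  have "A *\<^sub>v vv = 0\<^sub>v n"
  proof (rule eq_vecI)
    show "dim_vec (A *\<^sub>v vv) = dim_vec (0\<^sub>v n)" unfolding A_def by simp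
    fix r assume "r < dim_vec (0\<^sub>v n)"
    then have r: "r < n" by simp
    have "(A *\<^sub>v vv) $ r = (\<Sum>s\<in>{0..<n}. Mf (sel t w r) (sel t w s) * v (sel t w s))"
      using r unfolding A_def vv_def by (simp add: scalar_prod_def)
    also have "\<dots> = (\<Sum>p\<in>sel t w ` {0..<n}. Mf (sel t w r) p * v p)"
      by (subst sum.reindex) (auto intro: inj_on_subset[OF sel_inj])
    also have "\<dots> = (\<Sum>p\<in>{..e}. Mf (sel t w r) p * v p)"
      unfolding img by (rule sum.mono_neutral_left) (auto simp: rem)
    also have "\<dots> = 0" using rows[OF r] by (simp add: mult.commute)
    finally show "(A *\<^sub>v vv) $ r = 0\<^sub>v n $ r" using r by simp
  qed
  moreover have "vv \<in> carrier_vec n" unfolding vv_def by simp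
  moreover have "Determinant.det A \<noteq> 0" using det unfolding A_def .
  ultimately have vv0: "vv = 0\<^sub>v n" using det_0_iff_vec_prod_zero[OF A] by blast
  show ?thesis
  proof (cases "t \<le> p \<and> p < t + w")
    case True
    then show ?thesis using rem by blast
  next
    case False
    then have "p \<in> sel t w ` {0..<n}" unfolding img using pe by auto
    then obtain s where s: "s < n" "p = sel t w s" by auto
    have "vv $ s = 0" using vv0 s by simp
    then show ?thesis using s unfolding vv_def by simp
  qed
qed

definition tt :: "nat \<Rightarrow> nat \<Rightarrow> nat" where "tt d e = (if e = d then 2 else if e = d - 1 then 1 else 0)"
definition ww :: "nat \<Rightarrow> nat \<Rightarrow> nat" where "ww d e = (if e = d then 1 else if e = d - 1 then 2 else 0)"
definition nn :: "nat \<Rightarrow> nat \<Rightarrow> nat" where "nn d e = e + 1 - ww d e"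
definition Amat :: "nat \<Rightarrow> nat \<Rightarrow> (nat \<Rightarrow> complex) \<Rightarrow> complex mat" where
  "Amat d e a = mat (nn d e) (nn d e) (\<lambda>(r,s). M d e a (sel (tt d e) (ww d e) r) (sel (tt d e) (ww d e) s))"
definition extra :: "nat \<Rightarrow> nat \<Rightarrow> (nat \<Rightarrow> complex) \<Rightarrow> complex" where
  "extra d e a = (if e = d then a 2 else if e = d - 1 then
      (of_nat 2 * a 2) * (of_nat (d-2) * a 2) - (of_nat 3 * a 3) * (of_nat (d-1) * a 1) else 1)"
definition Pol :: "nat \<Rightarrow> nat \<Rightarrow> (nat \<Rightarrow> complex) \<Rightarrow> complex" where
  "Pol d e a = Determinant.det (Amat d e a) * extra d e a"

lemma poly_fun_diff: assumes "poly_fun n P" "poly_fun n Q" shows "poly_fun n (\<lambda>c. P c - Q c)"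
proof -
  have "poly_fun n (\<lambda>c. P c + (-1) * Q c)"
    by (intro poly_fun_add poly_fun_mult poly_fun_const assms)
  then show ?thesis by simp
qed

lemma poly_fun_det: "poly_fun d (\<lambda>a. Determinant.det (Amat d e a))"
proof -
  let ?n = "nn d e" and ?s = "sel (tt d e) (ww d e)"
  have eq: "(\<lambda>a. Determinant.det (Amat d e a)) = (\<lambda>a. \<Sum>\<sigma>\<in>{\<sigma>. \<sigma> permutes {0..<?n}}.
      signof \<sigma> * (\<Prod>i\<in>{0..<?n}. M d e a (?s i) (?s (\<sigma> i))))"
  proof (rule ext)
    fix a
    have "Amat d e a \<in> carrier_mat ?n ?n" unfolding Amat_def by simp
    then show "Determinant.det (Amat d e a) = (\<Sum>\<sigma>\<in>{\<sigma>. \<sigma> permutes {0..<?n}}.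
      signof \<sigma> * (\<Prod>i\<in>{0..<?n}. M d e a (?s i) (?s (\<sigma> i))))"
      unfolding det_def'[OF \<open>Amat d e a \<in> carrier_mat ?n ?n\<close>]
      by (intro sum.cong refl arg_cong2[where f = "(*)"] prod.cong)
         (auto simp: Amat_def permutes_in_image)
  qed
  show ?thesis unfolding eq
    by (intro poly_fun_sum poly_fun_mult poly_fun_const poly_fun_prod poly_fun_M)
       (auto simp: finite_permutations)
qed

lemma poly_fun_Pol: assumes d4: "d \<ge> 4" shows "poly_fun d (Pol d e)"
proof -
  have "poly_fun d (extra d e)"
  proof (cases "e = d")
    case True
    then show ?thesis unfolding extra_def using d4 by (simp add: poly_fun_var)
  next
    case False
    then show ?thesis
    proof (cases "e = d - 1")
      case True
      have "poly_fun d (\<lambda>a. (of_nat 2 * a 2) * (of_nat (d-2) * a 2) - (of_nat 3 * a 3) * (of_nat (d-1) * a 1))"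
        using d4 by (intro poly_fun_diff poly_fun_mult poly_fun_const poly_fun_var) auto
      then show ?thesis unfolding extra_def using False True by simp
    next
      case False2: False
      then show ?thesis unfolding extra_def using False by (simp add: poly_fun_const)
    qed
  qed
  then have "poly_fun d (\<lambda>a. Determinant.det (Amat d e a) * extra d e a)"
    by (intro poly_fun_mult poly_fun_det)
  then show ?thesis unfolding Pol_def by (simp add: fun_eq_iff)
qed

lemma nn_ww: assumes "d \<ge> 4" shows "nn d e + ww d e = e + 1" "tt d e \<le> nn d e"
  using assms by (auto simp: nn_def ww_def tt_def)

lemma W_nz:
  assumes d4: "d \<ge> 4" and e2: "e \<ge> 2" and pe: "p \<le> e"
    and nr: "\<not> (tt d e \<le> p \<and> p < tt d e + ww d e)"
  shows "W d e p 2 2 \<noteq> 0"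
proof -
  define m where "m = int d - 2"
  define pp where "pp = int p"
  define q where "q = int (e - p)"
  have q': "q = int e - int p" using pe unfolding q_def by simp
  have m2: "m \<ge> 2" using d4 unfolding m_def by simp
  have "m*(m-1)*pp*(pp-1) - 2*(m-1)*pp*q + 2*q*(q-1) \<noteq> 0"
  proof (rule Q_nz[OF m2])
    show "pp \<ge> 0" "q \<ge> 0" unfolding pp_def q_def by simp_all
    show "pp + q \<ge> 2" using e2 pe unfolding pp_def q' by simp
    show "\<not> (pp = 1 \<and> q = m)"
    proof
      assume h: "pp = 1 \<and> q = m"
      then have "p = 1" "e = d - 1" using pe d4 unfolding pp_def q' m_def by auto
      moreover have "tt d e = 1 \<and> ww d e = 2" using \<open>e = d - 1\<close> d4 unfolding tt_def ww_def by auto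
      ultimately show False using nr by simp
    qed
    show "\<not> (pp = 2 \<and> q = m - 1)"
    proof
      assume h: "pp = 2 \<and> q = m - 1"
      then have "p = 2" "e = d - 1" using pe d4 unfolding pp_def q' m_def by auto
      moreover have "tt d e = 1 \<and> ww d e = 2" using \<open>e = d - 1\<close> d4 unfolding tt_def ww_def by auto
      ultimately show False using nr by simp
    qed
    show "\<not> (pp = 2 \<and> q = m)"
    proof
      assume h: "pp = 2 \<and> q = m"
      then have "p = 2" "e = d" using pe d4 unfolding pp_def q' m_def by auto
      moreover have "tt d e = 2 \<and> ww d e = 1" using \<open>e = d\<close> unfolding tt_def ww_def by auto
      ultimately show False using nr by simp
    qed
  qed
  moreover have "m \<noteq> 0" using m2 by simp
  ultimately have "-2 * m^2 * ((m)*(m - 1)*(pp * (pp - 1)) - 2*(m - 1)*(pp * q) + 2*(q * (q - 1))) \<noteq> 0"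
    by (simp add: mult_ac)
  then show ?thesis unfolding W22_int[OF d4 pe] m_def pp_def q_def
    by (simp only: of_int_eq_0_iff diff_diff_eq) simp
qed

lemma Pol_delta: assumes d4: "d \<ge> 4" and e2: "e \<ge> 2" shows "Pol d e delta2 \<noteq> 0"
proof -
  let ?n = "nn d e" and ?s = "sel (tt d e) (ww d e)"
  let ?A = "Amat d e delta2"
  have A: "?A \<in> carrier_mat ?n ?n" unfolding Amat_def by simp
  have entry: "?A $$ (r, s) = (if r = s then W d e (?s s) 2 2 else 0)" if "r < ?n" "s < ?n" for r s
    using that sel_inj[of "tt d e" "ww d e"] unfolding Amat_def
    by (auto simp: M_delta[OF d4] inj_eq)
  have ut: "upper_triangular ?A"
    using entry A by (intro upper_triangularI) auto
  have img: "?s ` {..<?n} = {..<?n + ww d e} - {tt d e..<tt d e + ww d e}"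
    by (rule sel_image) (use nn_ww[OF d4] in auto)
  have nz: "W d e (?s i) 2 2 \<noteq> 0" if "i < ?n" for i
  proof -
    have "?s i \<in> ?s ` {..<?n}" using that by simp
    then have "?s i \<in> {..<e+1} - {tt d e..<tt d e + ww d e}" unfolding img nn_ww(1)[OF d4] .
    then show ?thesis by (intro W_nz[OF d4 e2]) auto
  qed
  have "Determinant.det ?A = prod_list (diag_mat ?A)" by (rule det_upper_triangular[OF ut A])
  also have "\<dots> \<noteq> 0"
    using A nz entry by (auto simp: diag_mat_def prod_list_zero_iff)
  finally have dA: "Determinant.det ?A \<noteq> 0" .
  have ex: "extra d e delta2 \<noteq> 0"
  proof -
    have h2: "(of_nat d :: complex) \<noteq> 2"
    proof
      assume "(of_nat d :: complex) = 2"
      then have "(of_nat d :: complex) = of_nat 2" by simp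
      then have "d = 2" by (simp only: of_nat_eq_iff)
      with d4 show False by simp
    qed
    have h3: "(of_nat (d-2) :: complex) \<noteq> 0"
    proof
      assume "(of_nat (d-2) :: complex) = 0"
      then have "d - 2 = 0" by (simp only: of_nat_eq_0_iff)
      with d4 show False by simp
    qed
    have eq: "extra d e delta2 = (if e = d then 1 else if e = d - 1 then 2 * of_nat (d-2) else 1)"
      unfolding extra_def delta2_def by simp
    show ?thesis unfolding eq using h3 h2 by auto
  qed
  show ?thesis unfolding Pol_def using dA ex by simp
qed

lemma W_small: assumes "e \<le> 1" "p \<le> e" shows "W d e p i j = 0"
  using assms by (cases p) (auto simp: W_def)

lemma rowlin:
  "(\<Sum>p\<le>e. (b p - s * c p - t * c' p) * Mk p) =
     (\<Sum>p\<le>e. b p * Mk p) - s * (\<Sum>p\<le>e. c p * Mk p) - t * (\<Sum>p\<le>e. c' p * Mk p)"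
  for Mk :: "nat \<Rightarrow> complex"
  by (simp add: sum_subtractf sum_distrib_left sum.distrib algebra_simps)

lemma good_case:
  assumes d4: "d \<ge> 4" and P: "\<And>e. e \<ge> 2 \<Longrightarrow> Pol d e a \<noteq> 0"
  shows "(\<forall>x y. Top (bform d a) (bform e b) x y = 0) \<longleftrightarrow>
           ((e = 0 \<and> (\<exists>s. bform e b = (\<lambda>x y. s))) \<or>
            (e = 1 \<and> (\<exists>s t. bform e b = (\<lambda>x y. s * x + t * y))) \<or>
            (e = d - 1 \<and> (\<exists>s t. bform e b =
                (\<lambda>x y. s * D1 (bform d a) x y + t * D2 (bform d a) x y))) \<or>
            (e = d \<and> (\<exists>s. bform e b = (\<lambda>x y. s * bform d a x y))) \<or>
            bform e b = (\<lambda>x y. 0))"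
proof (cases "e \<le> 1")
  case True
  have L: "\<forall>x y. Top (bform d a) (bform e b) x y = 0"
    unfolding KEY_iff[OF d4]
  proof (intro allI impI sum.neutral ballI)
    fix k p assume "p \<in> {..e}"
    then have "p \<le> e" by simp
    then have Wz: "\<And>i j. W d e p i j = 0" using W_small[OF True] by blast
    show "b p * M d e a k p = 0" by (simp add: M_def Wz cong: if_cong)
  qed
  have R: "(e = 0 \<and> (\<exists>s. bform e b = (\<lambda>x y. s))) \<or>
            (e = 1 \<and> (\<exists>s t. bform e b = (\<lambda>x y. s * x + t * y)))"
  proof (cases "e = 0")
    case True
    then show ?thesis by (auto simp: bform_def)
  next
    case False
    then have "e = 1" using \<open>e \<le> 1\<close> by simp
    then have "bform e b = (\<lambda>x y. b 1 * x + b 0 * y)" by (auto simp: bform_def intro!: ext)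
    then show ?thesis using \<open>e = 1\<close> by blast
  qed
  show ?thesis using L R by blast
next
  case False
  then have e2: "e \<ge> 2" by simp
  define c1 where "c1 = (\<lambda>i. of_nat (i+1) * a (i+1) :: complex)"
  define c2 where "c2 = (\<lambda>i. of_nat (d-i) * a i :: complex)"
  have d1: "d \<ge> 1" using d4 by simp
  have Mc1: "\<forall>k\<le>(d-1)+2*d. (\<Sum>p\<le>d-1. c1 p * M d (d-1) a k p) = 0"
    unfolding KEY_iff[OF d4, symmetric] c1_def D1_bform[OF d1, symmetric] using Top_D1 by blast
  have Mc2: "\<forall>k\<le>(d-1)+2*d. (\<Sum>p\<le>d-1. c2 p * M d (d-1) a k p) = 0"
    unfolding KEY_iff[OF d4, symmetric] c2_def D2_bform[OF d1, symmetric] using Top_D2 by blast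
  have Ma: "\<forall>k\<le>d+2*d. (\<Sum>p\<le>d. a p * M d d a k p) = 0"
    unfolding KEY_iff[OF d4, symmetric] using Top_self[OF d4] by blast
  have D1eq: "D1 (bform d a) = bform (d-1) c1" unfolding c1_def by (rule D1_bform[OF d1])
  have D2eq: "D2 (bform d a) = bform (d-1) c2" unfolding c2_def by (rule D2_bform[OF d1])
  have Pe: "Pol d e a \<noteq> 0" using P e2 by blast
  then have detne: "Determinant.det (Amat d e a) \<noteq> 0" and exne: "extra d e a \<noteq> 0"
    unfolding Pol_def by auto
  have nw: "nn d e + ww d e = e + 1" "tt d e \<le> nn d e" using nn_ww[OF d4] by auto
  show ?thesis
  proof
    assume L: "\<forall>x y. Top (bform d a) (bform e b) x y = 0"
    then have Mb: "\<forall>k\<le>e+2*d. (\<Sum>p\<le>e. b p * M d e a k p) = 0" unfolding KEY_iff[OF d4] .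
    have inj: "v p = 0"
      if rows: "\<And>k. k \<le> e+2*d \<Longrightarrow> (\<Sum>p\<le>e. v p * M d e a k p) = 0"
      and rem: "\<And>p. tt d e \<le> p \<Longrightarrow> p < tt d e + ww d e \<Longrightarrow> v p = 0"
      and pe: "p \<le> e" for v p
    proof (rule inj_sub[where Mf = "M d e a" and n = "nn d e" and t = "tt d e" and w = "ww d e" and e = e])
      show "Determinant.det (mat (nn d e) (nn d e) (\<lambda>(r, s). M d e a (sel (tt d e) (ww d e) r) (sel (tt d e) (ww d e) s))) \<noteq> 0"
        using detne unfolding Amat_def .
      show "tt d e \<le> nn d e" "nn d e + ww d e = e + 1" using nw by auto
      fix r assume r: "r < nn d e"
      have "sel (tt d e) (ww d e) r \<in> sel (tt d e) (ww d e) ` {..<nn d e}" using r by simp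
      then have "sel (tt d e) (ww d e) r \<le> e"
        unfolding sel_image[OF nw(2)] using nw(1) by auto
      then show "(\<Sum>p\<le>e. v p * M d e a (sel (tt d e) (ww d e) r) p) = 0" using rows by simp
    qed (use rem pe in auto)
    consider "e = d" | "e = d - 1" | "e \<noteq> d" "e \<noteq> d - 1" by blast
    then show "(e = 0 \<and> (\<exists>s. bform e b = (\<lambda>x y. s))) \<or>
            (e = 1 \<and> (\<exists>s t. bform e b = (\<lambda>x y. s * x + t * y))) \<or>
            (e = d - 1 \<and> (\<exists>s t. bform e b =
                (\<lambda>x y. s * D1 (bform d a) x y + t * D2 (bform d a) x y))) \<or>
            (e = d \<and> (\<exists>s. bform e b = (\<lambda>x y. s * bform d a x y))) \<or>
            bform e b = (\<lambda>x y. 0)"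
    proof cases
      case 1
      have a2: "a 2 \<noteq> 0" using exne 1 by (simp add: extra_def)
      define s where "s = b 2 / a 2"
      have tw: "tt d e = 2" "ww d e = 1" using 1 by (auto simp: tt_def ww_def)
      have v0: "b p - s * a p - 0 * a p = 0" if "p \<le> e" for p
      proof (rule inj[OF _ _ that])
        fix k assume "k \<le> e + 2*d"
        then show "(\<Sum>p\<le>e. (b p - s * a p - 0 * a p) * M d e a k p) = 0"
          unfolding rowlin using Mb Ma 1 by simp
      next
        fix p assume "tt d e \<le> p" "p < tt d e + ww d e"
        then have "p = 2" using tw by simp
        then show "b p - s * a p - 0 * a p = 0" using a2 by (simp add: s_def)
      qed
      have "bform e b = (\<lambda>x y. s * bform d a x y)"
        using v0 1 by (auto simp: bform_def sum_distrib_left intro!: ext sum.cong)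
      then show ?thesis using 1 by blast
    next
      case 2
      have ned: "e \<noteq> d" using 2 d4 by simp
      define Dl where "Dl = c1 1 * c2 2 - c1 2 * c2 1"
      have two: "(1::nat) + 1 = 2" and three: "(2::nat) + 1 = 3" by simp_all
      have cf: "c1 1 = of_nat 2 * a 2" "c1 2 = of_nat 3 * a 3" "c2 1 = of_nat (d-1) * a 1"
          "c2 2 = of_nat (d-2) * a 2"
        unfolding c1_def c2_def two three by simp_all
      have "Dl = extra d e a" unfolding Dl_def extra_def cf using 2 ned by simp
      then have Dl: "Dl \<noteq> 0" using exne by simp
      define s where "s = (b 1 * c2 2 - b 2 * c2 1) / Dl"
      define t where "t = (c1 1 * b 2 - c1 2 * b 1) / Dl"
      have tw: "tt d e = 1" "ww d e = 2" using 2 ned by (auto simp: tt_def ww_def)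
      have v0: "b p - s * c1 p - t * c2 p = 0" if "p \<le> e" for p
      proof (rule inj[OF _ _ that])
        fix k assume "k \<le> e + 2*d"
        then show "(\<Sum>p\<le>e. (b p - s * c1 p - t * c2 p) * M d e a k p) = 0"
          unfolding rowlin using Mb Mc1 Mc2 2 by simp
      next
        fix p assume "tt d e \<le> p" "p < tt d e + ww d e"
        then have "p = 1 \<or> p = 2" using tw by auto
        then show "b p - s * c1 p - t * c2 p = 0"
          using Dl by (auto simp: s_def t_def Dl_def field_simps)
      qed
      have bb: "b i = s * c1 i + t * c2 i" if "i \<le> e" for i
        using v0[OF that] by (metis diff_diff_eq eq_iff_diff_eq_0)
      have "bform e b = bform e (\<lambda>i. s * c1 i + t * c2 i)"
        unfolding bform_def using bb by (intro ext sum.cong refl) auto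
      then have "bform e b = (\<lambda>x y. s * D1 (bform d a) x y + t * D2 (bform d a) x y)"
        using 2 by (simp add: D1eq D2eq bform_lin)
      then show ?thesis using 2 by blast
    next
      case 3
      have tw: "tt d e = 0" "ww d e = 0" using 3 by (auto simp: tt_def ww_def)
      have v0: "b p - 0 * b p - 0 * b p = 0" if "p \<le> e" for p
      proof (rule inj[OF _ _ that])
        fix k assume "k \<le> e + 2*d"
        then show "(\<Sum>p\<le>e. (b p - 0 * b p - 0 * b p) * M d e a k p) = 0"
          using Mb by simp
      qed (use tw in auto)
      have "bform e b = (\<lambda>x y. 0)"
        using v0 by (auto simp: bform_def intro!: ext sum.neutral)
      then show ?thesis by blast
    qed
  next
    assume R: "(e = 0 \<and> (\<exists>s. bform e b = (\<lambda>x y. s))) \<or>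
            (e = 1 \<and> (\<exists>s t. bform e b = (\<lambda>x y. s * x + t * y))) \<or>
            (e = d - 1 \<and> (\<exists>s t. bform e b =
                (\<lambda>x y. s * D1 (bform d a) x y + t * D2 (bform d a) x y))) \<or>
            (e = d \<and> (\<exists>s. bform e b = (\<lambda>x y. s * bform d a x y))) \<or>
            bform e b = (\<lambda>x y. 0)"
    have "\<forall>k\<le>e+2*d. (\<Sum>p\<le>e. b p * M d e a k p) = 0"
    proof -
      consider "e = d - 1" "\<exists>s t. bform e b = (\<lambda>x y. s * D1 (bform d a) x y + t * D2 (bform d a) x y)"
        | "e = d" "\<exists>s. bform e b = (\<lambda>x y. s * bform d a x y)"
        | "bform e b = (\<lambda>x y. 0)"
        using R e2 by auto
      then show ?thesis
      proof cases
        case 1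
        then obtain s t where st: "bform e b = (\<lambda>x y. s * D1 (bform d a) x y + t * D2 (bform d a) x y)" by blast
        have "bform e b = bform e (\<lambda>i. s * c1 i + t * c2 i)"
          unfolding st D1eq D2eq bform_lin using 1 by simp
        then have bb: "\<forall>i\<le>e. b i = s * c1 i + t * c2 i" by (rule bform_eqD)
        have "(\<Sum>p\<le>e. b p * M d e a k p) = (\<Sum>p\<le>e. (b p - s * c1 p - t * c2 p) * M d e a k p)
            + s * (\<Sum>p\<le>e. c1 p * M d e a k p) + t * (\<Sum>p\<le>e. c2 p * M d e a k p)" for k
          unfolding rowlin by simp
        moreover have "(\<Sum>p\<le>e. (b p - s * c1 p - t * c2 p) * M d e a k p) = 0" for k
          using bb by (intro sum.neutral) auto
        ultimately show ?thesis using Mc1 Mc2 1 by simp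
      next
        case 2
        then obtain s where st: "bform e b = (\<lambda>x y. s * bform d a x y)" by blast
        have "bform e b = bform e (\<lambda>i. s * a i + 0 * a i)"
          unfolding st bform_lin[symmetric] using 2 by simp
        then have bb: "\<forall>i\<le>e. b i = s * a i + 0 * a i" by (rule bform_eqD)
        have "(\<Sum>p\<le>e. b p * M d e a k p) = (\<Sum>p\<le>e. (b p - s * a p - 0 * a p) * M d e a k p)
            + s * (\<Sum>p\<le>e. a p * M d e a k p) + 0 * (\<Sum>p\<le>e. a p * M d e a k p)" for k
          unfolding rowlin by simp
        moreover have "(\<Sum>p\<le>e. (b p - s * a p - 0 * a p) * M d e a k p) = 0" for k
          using bb by (intro sum.neutral) auto
        ultimately show ?thesis using Ma 2 by simp
      next
        case 3
        then have "\<forall>i\<le>e. b i = 0" using bform_zero[of e b] by simp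
        then show ?thesis by simp
      qed
    qed
    then show "\<forall>x y. Top (bform d a) (bform e b) x y = 0" unfolding KEY_iff[OF d4] .
  qed
qed

theorem lemma9p2:
  fixes d :: nat
  assumes "d \<ge> 4"
  shows "very_general d (\<lambda>a. \<forall>(e::nat) (b::nat \<Rightarrow> complex).
           (\<forall>x y. Top (bform d a) (bform e b) x y = 0) \<longleftrightarrow>
           ((e = 0 \<and> (\<exists>s. bform e b = (\<lambda>x y. s))) \<or>
            (e = 1 \<and> (\<exists>s t. bform e b = (\<lambda>x y. s * x + t * y))) \<or>
            (e = d - 1 \<and> (\<exists>s t. bform e b =
                (\<lambda>x y. s * D1 (bform d a) x y + t * D2 (bform d a) x y))) \<or>
            (e = d \<and> (\<exists>s. bform e b = (\<lambda>x y. s * bform d a x y))) \<or>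
            bform e b = (\<lambda>x y. 0)))"
  unfolding very_general_def
proof (intro exI conjI allI impI)
  let ?V = "\<lambda>k. {a. Pol d (k+2) a = 0}"
  show "proper_subvariety d (?V k)" for k
    unfolding proper_subvariety_def
  proof
    show "?V k \<noteq> UNIV" using Pol_delta[OF assms, of "k+2"] by auto
    show "\<exists>S. (\<forall>P\<in>S. poly_fun d P) \<and> ?V k = {c. \<forall>P\<in>S. P c = 0}"
      by (rule exI[of _ "{Pol d (k+2)}"]) (simp add: poly_fun_Pol[OF assms])
  qed
  fix c :: "nat \<Rightarrow> complex" and e :: nat and b :: "nat \<Rightarrow> complex"
  assume cV: "c \<notin> (\<Union>k. ?V k)"
  have P: "Pol d e' c \<noteq> 0" if "e' \<ge> 2" for e'
  proof -
    have "c \<notin> ?V (e'-2)" using cV by blast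
    then have "Pol d (e'-2+2) c \<noteq> 0" by simp
    moreover have "e'-2+2 = e'" using that by simp
    ultimately show ?thesis by simp
  qed
  show "(\<forall>x y. Top (bform d c) (bform e b) x y = 0) \<longleftrightarrow>
           ((e = 0 \<and> (\<exists>s. bform e b = (\<lambda>x y. s))) \<or>
            (e = 1 \<and> (\<exists>s t. bform e b = (\<lambda>x y. s * x + t * y))) \<or>
            (e = d - 1 \<and> (\<exists>s t. bform e b =
                (\<lambda>x y. s * D1 (bform d c) x y + t * D2 (bform d c) x y))) \<or>
            (e = d \<and> (\<exists>s. bform e b = (\<lambda>x y. s * bform d c x y))) \<or>
            bform e b = (\<lambda>x y. 0))"
    by (rule good_case[OF assms P])
qed

end
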